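(* Let $m$ be a positive integer, $x$ a positive integer and $r\in\{0,\dots,m-1\}$, and write $x_k=x_k(x,r)$, $r_k=r_k(x,r)$. For any integers $n,j$ with $n\ge1$ and $0\le j\le n$, $$(m+1)^{j}\big((m+1)x_{n-j}+r_{n-j}\big)\equiv \sum_{k=n-j+1}^{n}(m+1)^{n-k}m^{k-1+j-n}r_k \pmod{m^{j}}.$$ In particular, $(m+1)^n\big((m+1)x+r\big)\equiv\sum_{k=1}^n(m+1)^{n-k}m^{k-1}r_k\pmod{m^n}$ for every positive integer $n$.
   Context: Fix a positive integer $m$. The triangle $T_m$ is an array whose row $x$ ($x=1,2,\dots$) has $x$ entries, in columns $0,\dots,x-1$. Row $1$ is the single entry $1$. For $x>1$, row $x$ is obtained from row $x-1$ by rotating it cyclically left by $m$ positions (the entry in column $c$ of row $x-1$ moves to column $(c-m)\bmod(x-1)\in\{0,\dots,x-2\}$ of row $x$), then appending in column $x-1$ a new entry equal to $1$ plus the entry in column $0$ of row $x-1$. Entries are individual objects keeping their identity as they move. Tracking: for a positive integer $x$ and $r\in\{0,\dots,m-1\}$, follow the individual entry in row $x$, column $r\bmod x$. Let $(x_0,r_0),(x_1,r_1),\dots$ be the list, in strictly increasing lexicographic order, of all integer pairs $(y,c)$ with $y\ge x$, $0\le c\le m-1$, $(y,c)\ge (x,r)$ lexicographically, such that the tracked entry occupies column $c\bmod y$ of row $y$ (so $x_0=x$, $r_0=r$). Write $x_n(x,r)=x_n$, $r_n(x,r)=r_n$. *)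

theory Defs
  imports Main "HOL-Library.Product_Lexorder" "HOL-Library.Infinite_Set" "HOL-Number_Theory.Cong"
begin

text \<open>Column occupied, in row x + k of the triangle T_m, by the individual entry that sits in
  row x, column r mod x.  Passing from row y to row y+1 the entry in column c moves to
  column (c - m) mod y; entries are never removed.\<close>
fun tpos :: "nat \<Rightarrow> nat \<Rightarrow> nat \<Rightarrow> nat \<Rightarrow> nat" where
  "tpos m x r 0 = r mod x"
| "tpos m x r (Suc k) = nat ((int (tpos m x r k) - int m) mod int (x + k))"

definition track_set :: "nat \<Rightarrow> nat \<Rightarrow> nat \<Rightarrow> (nat \<times> nat) set" where
  "track_set m x r = {(y, c). x \<le> y \<and> c < m \<and> (x, r) \<le> (y, c) \<and> tpos m x r (y - x) = c mod y}"

text \<open>(x_n, r_n): the n-th element (from 0) of track_set in increasing lexicographic order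
  (the order on pairs is the lexicographic one from Product_Lexorder).\<close>
definition xseq :: "nat \<Rightarrow> nat \<Rightarrow> nat \<Rightarrow> nat \<Rightarrow> nat" where
  "xseq m x r n = fst (enumerate (track_set m x r) n)"

definition rseq :: "nat \<Rightarrow> nat \<Rightarrow> nat \<Rightarrow> nat \<Rightarrow> nat" where
  "rseq m x r n = snd (enumerate (track_set m x r) n)"

end

theory Submission
  imports Defs
begin

lemma tpos_Suc': "x \<le> y \<Longrightarrow> tpos m x r (Suc y - x) = nat ((int (tpos m x r (y - x)) - int m) mod int y)"
  by (simp add: Suc_diff_le)

lemma tpos_run:
  assumes "x \<le> y" "c < m" "m \<le> y + c" "tpos m x r (y-x) = c mod y" "0 < x"
  shows "1 \<le> t \<Longrightarrow> t*m \<le> y+c \<Longrightarrow> tpos m x r (y + t - x) = y + c - t*m"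
proof (induction t)
  case 0 then show ?case by simp
next
  case (Suc t)
  have y0: "0 < y" using assms by simp
  show ?case
  proof (cases "t = 0")
    case True
    have e: "y + Suc t - x = Suc y - x" using True by simp
    have "(int (c mod y) - int m) mod int y = (int c - int m) mod int y"
      by (simp add: mod_diff_left_eq zmod_int)
    also have "int c - int m = (int c + int y - int m) + (-1) * int y" by simp
    also have "((int c + int y - int m) + (-1) * int y) mod int y = (int c + int y - int m) mod int y"
      by (metis mod_mult_self1 mult.commute)
    also have "\<dots> = int c + int y - int m" using assms y0 by (intro mod_pos_pos_trivial) auto
    finally show ?thesis using e tpos_Suc'[OF assms(1), of m r] assms True by simp
  next
    case False
    have IH: "tpos m x r (y + t - x) = y + c - t*m" using Suc False by simp
    have e: "y + Suc t - x = Suc (y + t) - x" by simp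
    have le1: "m + t * m \<le> y + c" using Suc.prems by simp
    have d: "y + c - t*m = (y + c - Suc t*m) + m" using le1 by simp
    have i: "int (y + c - t*m) - int m = int (y + c - Suc t * m)" using d by simp
    have lt: "y + c - Suc t * m < y + t" using assms(2) le1 by simp
    have "(int (y + c - t*m) - int m) mod int (y+t) = int (y + c - Suc t * m)"
      unfolding i using lt by (intro mod_pos_pos_trivial) auto
    then show ?thesis using e tpos_Suc'[of x "y+t" m r] IH assms(1)
      by simp
  qed
qed

lemma dvd_gap: "c < (d::nat) \<Longrightarrow> d mod y = c mod y \<Longrightarrow> c + y \<le> d"
proof -
  assume a: "c < d" "d mod y = c mod y"
  then have "y dvd d - c" using mod_eq_dvd_iff_nat[of c d y] by simp
  moreover have "0 < d - c" using a by simp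
  ultimately have "y \<le> d - c" by (rule dvd_imp_le)
  then show ?thesis using a by simp
qed

lemma succ_exists:
  assumes m0: "0 < m" and x0: "0 < x" and mem: "(y, c) \<in> track_set m x r"
  shows "\<exists>y' c'. (y', c') \<in> track_set m x r \<and> (y, c) < (y', c') \<and> m*y' + c' = (m+1)*y + c
     \<and> (\<forall>z d. (z, d) \<in> track_set m x r \<longrightarrow> (y, c) < (z, d) \<longrightarrow> (y', c') \<le> (z, d))"
proof -
  have xy: "x \<le> y" and cm: "c < m" and le: "(x, r) \<le> (y, c)" and P: "tpos m x r (y - x) = c mod y"
    using mem by (auto simp: track_set_def)
  have y0: "0 < y" using xy x0 by simp
  show ?thesis
  proof (cases "c + y < m")
    case True
    have "(y, c + y) \<in> track_set m x r" using True xy le P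
      by (auto simp: track_set_def less_eq_prod_def)
    moreover have "\<forall>z d. (z, d) \<in> track_set m x r \<longrightarrow> (y, c) < (z, d) \<longrightarrow> (y, c+y) \<le> (z, d)"
    proof (intro allI impI)
      fix z d assume A: "(z, d) \<in> track_set m x r" "(y, c) < (z, d)"
      show "(y, c+y) \<le> (z, d)"
      proof (cases "z = y")
        case True
        with A have "c < d" "d mod y = c mod y" using P by (auto simp: track_set_def less_prod_def)
        then have "c + y \<le> d"
          using dvd_gap by blast
        then show ?thesis using True by (simp add: less_eq_prod_def)
      next
        case False then show ?thesis using A by (auto simp: less_eq_prod_def less_prod_def)
      qed
    qed
    ultimately show ?thesis using y0
      by (intro exI[of _ y] exI[of _ "c+y"]) (auto simp: less_prod_def algebra_simps)
  next
    case False
    define t where "t = (y + c) div m"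
    define c' where "c' = (y + c) mod m"
    have "m div m \<le> (y + c) div m" by (rule div_le_mono) (use False in simp)
    then have t1: "1 \<le> t" using m0 by (simp add: t_def)
    have tm: "t * m \<le> y + c" by (simp add: t_def div_times_less_eq_dividend)
    have c'eq: "c' = y + c - t*m" by (simp add: c'_def t_def minus_div_mult_eq_mod[symmetric])
    have run: "\<And>s. 1 \<le> s \<Longrightarrow> s*m \<le> y+c \<Longrightarrow> tpos m x r (y + s - x) = y + c - s*m"
      using tpos_run[OF xy cm _ P x0] False by simp
    have c'm: "c' < m" using m0 by (simp add: c'_def)
    have Pt: "tpos m x r (y + t - x) = c'" using run[OF t1 tm] c'eq by simp
    have lt: "tpos m x r (y + t - x) < y + t - x + x"
    proof -
      have "\<And>k. tpos m x r k < x + k"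
      proof -
        fix k show "tpos m x r k < x + k"
        proof (cases k)
          case 0 then show ?thesis using x0 by simp
        next
          case (Suc k')
          have xk: "0 < int (x + k')" using x0 by simp
          have "(int (tpos m x r k') - int m) mod int (x + k') < int (x + k')"
            using pos_mod_bound[OF xk] .
          moreover have "0 \<le> (int (tpos m x r k') - int m) mod int (x + k')"
            using pos_mod_sign[OF xk] .
          ultimately show ?thesis using Suc by (simp add: nat_less_iff)
        qed
      qed
      then show ?thesis by (metis add.commute)
    qed
    have c'lt: "c' < y + t" using lt Pt xy by simp
    have mem': "(y + t, c') \<in> track_set m x r"
      using xy c'm le Pt c'lt t1 by (auto simp: track_set_def less_eq_prod_def)
    have eq: "m*(y+t) + c' = (m+1)*y + c"
    proof -
      have "m*t + c' = y + c" by (simp add: t_def c'_def mult.commute)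
      then show ?thesis by (simp add: algebra_simps)
    qed
    have minimal: "\<forall>z d. (z, d) \<in> track_set m x r \<longrightarrow> (y, c) < (z, d) \<longrightarrow> (y+t, c') \<le> (z, d)"
    proof (intro allI impI)
      fix z d assume A: "(z, d) \<in> track_set m x r" "(y, c) < (z, d)"
      have dm: "d < m" and Pz: "tpos m x r (z - x) = d mod z" using A by (auto simp: track_set_def)
      have zy: "y \<le> z" using A by (auto simp: less_prod_def)
      show "(y+t, c') \<le> (z, d)"
      proof (cases "z = y")
        case True
        with A have "c < d" "d mod y = c mod y" using P Pz by (auto simp: less_prod_def)
        then have "c + y \<le> d"
          using dvd_gap by blast
        then show ?thesis using False dm by simp
      next
        case zne: False
        show ?thesis
        proof (cases "z < y + t")
          case True
          define s where "s = z - y"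
          have s1: "1 \<le> s" "s < t" using zne zy True by (auto simp: s_def)
          have "(s+1)*m \<le> t*m" using s1 by (intro mult_right_mono) auto
          then have sm: "s*m \<le> y+c" "m \<le> y + c - s*m" using tm by (auto simp: algebra_simps)
          have "tpos m x r (z - x) = y + c - s*m" using run[OF s1(1) sm(1)] zy by (simp add: s_def)
          then have "m \<le> d mod z" using Pz sm by simp
          moreover have "d mod z \<le> d" by simp
          ultimately show ?thesis using dm by simp
        next
          case False
          show ?thesis
          proof (cases "z = y + t")
            case True
            then have "d mod z = c'" using Pz Pt by simp
            then have "c' \<le> d" by (metis mod_less_eq_dividend)
            then show ?thesis using True by (simp add: less_eq_prod_def)
          next
            case False
            then show ?thesis using \<open>\<not> z < y + t\<close> by (simp add: less_eq_prod_def)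
          qed
        qed
      qed
    qed
    show ?thesis using mem' eq minimal t1
      by (intro exI[of _ "y+t"] exI[of _ c']) (auto simp: less_prod_def)
  qed
qed

lemma cong_abs:
  fixes M :: int and X R :: "nat \<Rightarrow> int"
  assumes rec: "\<And>k. M * X (Suc k) + R (Suc k) = (M+1)*X k + R k"
  shows "j \<le> n \<Longrightarrow> [(M+1)^j * ((M+1)*X(n-j) + R(n-j))
     = (\<Sum>k = n-j+1..n. (M+1)^(n-k) * M^(k-1+j-n) * R k)] (mod M^j)"
proof (induction j)
  case 0 then show ?case by simp
next
  case (Suc j)
  define a where "a = n - Suc j"
  have na: "n - j = Suc a" using Suc.prems by (simp add: a_def)
  have nSj: "n - Suc j = a" by (simp add: a_def)
  define A' where "A' = (M+1)*X(Suc a) + R(Suc a)"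
  define Sj where "Sj = (\<Sum>k = Suc (Suc a)..n. (M+1)^(n-k) * M^(k-1+j-n) * R k)"
  have IH: "M^j dvd ((M+1)^j * A' - Sj)"
    using Suc.IH Suc.prems na unfolding A'_def Sj_def cong_iff_dvd_diff by simp
  have lhs: "(M+1)^Suc j * ((M+1)*X a + R a) = M*((M+1)^j * A') + (M+1)^j * R (Suc a)"
  proof -
    have "(M+1)*X a + R a = M * X (Suc a) + R (Suc a)" using rec[of a] by simp
    then show ?thesis unfolding A'_def by (simp add: algebra_simps)
  qed
  have an: "Suc a \<le> n" using Suc.prems by (simp add: a_def)
  have split: "(\<Sum>k = Suc a..n. (M+1)^(n-k) * M^(k-1+Suc j-n) * R k)
     = (M+1)^(n - Suc a) * M^(Suc a - 1 + Suc j - n) * R (Suc a)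
       + (\<Sum>k = Suc (Suc a)..n. (M+1)^(n-k) * M^(k-1+Suc j-n) * R k)"
    using an by (rule sum.atLeast_Suc_atMost)
  have t1: "(M+1)^(n - Suc a) * M^(Suc a - 1 + Suc j - n) * R (Suc a) = (M+1)^j * R (Suc a)"
  proof -
    have "n - Suc a = j" "Suc a - 1 + Suc j - n = 0" using Suc.prems by (auto simp: a_def)
    then show ?thesis by simp
  qed
  have t2: "(\<Sum>k = Suc (Suc a)..n. (M+1)^(n-k) * M^(k-1+Suc j-n) * R k) = M * Sj"
    unfolding Sj_def sum_distrib_left
  proof (rule sum.cong)
    fix k assume "k \<in> {Suc (Suc a)..n}"
    then have "k - 1 + Suc j - n = Suc (k - 1 + j - n)" using Suc.prems by (auto simp: a_def)
    then show "(M+1)^(n-k) * M^(k-1+Suc j-n) * R k = M * ((M+1)^(n-k) * M^(k-1+j-n) * R k)"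
      by (simp add: algebra_simps)
  qed simp
  have rhs: "(\<Sum>k = n - Suc j + 1..n. (M+1)^(n-k) * M^(k-1+Suc j-n) * R k) = (M+1)^j * R (Suc a) + M * Sj"
    using split t1 t2 nSj by simp
  have "M^Suc j dvd M * ((M+1)^j * A' - Sj)" using IH by simp
  moreover have "(M+1)^Suc j * ((M+1)*X(n-Suc j) + R(n-Suc j))
     - (\<Sum>k = n - Suc j + 1..n. (M+1)^(n-k) * M^(k-1+Suc j-n) * R k) = M * ((M+1)^j * A' - Sj)"
    unfolding rhs unfolding nSj lhs by (simp add: algebra_simps)
  ultimately show ?case unfolding cong_iff_dvd_diff by simp
qed

context
  fixes m x r :: nat
  assumes m0: "0 < m" and x0: "0 < x"
begin

lemma start_mem: "r < m \<Longrightarrow> (x, r) \<in> track_set m x r"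
  by (simp add: track_set_def)

lemma infinite_track: assumes "r < m" shows "infinite (track_set m x r)"
proof
  assume f: "finite (track_set m x r)"
  have ne: "track_set m x r \<noteq> {}" using start_mem assms by blast
  obtain y c where yc: "Max (track_set m x r) = (y, c)" by (cases "Max (track_set m x r)")
  have "(y, c) \<in> track_set m x r" using Max_in[OF f ne] yc by simp
  then obtain y' c' where "(y', c') \<in> track_set m x r" "(y, c) < (y', c')"
    using succ_exists[OF m0 x0] by blast
  then show False using Max_ge[OF f, of "(y',c')"] yc by (metis leD)
qed

lemma enum0: assumes "r < m" shows "enumerate (track_set m x r) 0 = (x, r)"
  unfolding enumerate_0
  by (rule Least_equality) (auto simp: track_set_def start_mem assms)

lemma enum_rec: assumes "r < m"
  shows "m * xseq m x r (Suc k) + rseq m x r (Suc k) = (m+1) * xseq m x r k + rseq m x r k"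
proof -
  let ?S = "track_set m x r"
  have inf: "infinite ?S" using infinite_track assms .
  obtain y c where e: "enumerate ?S k = (y, c)" by (cases "enumerate ?S k")
  have "(y, c) \<in> ?S" using enumerate_in_set[OF inf, of k] e by simp
  then obtain y' c' where s: "(y', c') \<in> ?S" "(y, c) < (y', c')" "m*y' + c' = (m+1)*y + c"
     "\<forall>z d. (z, d) \<in> ?S \<longrightarrow> (y, c) < (z, d) \<longrightarrow> (y', c') \<le> (z, d)"
    using succ_exists[OF m0 x0] by blast
  have "enumerate ?S (Suc k) = (LEAST s. s \<in> ?S \<and> enumerate ?S k < s)"
    by (rule enumerate_Suc''[OF inf])
  also have "\<dots> = (y', c')"
    unfolding e
  proof (rule Least_equality)
    show "(y', c') \<in> ?S \<and> (y, c) < (y', c')" using s by simp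
  next
    fix p assume "p \<in> ?S \<and> (y, c) < p"
    then show "(y', c') \<le> p" using s(4) by (cases p) blast
  qed
  finally show ?thesis using e s(3) by (simp add: xseq_def rseq_def)
qed

end

theorem mainTheorem13:
  fixes m x r n j :: nat
  assumes "0 < m" and "0 < x" and "r < m" and "1 \<le> n" and "j \<le> n"
  shows "[int (m + 1) ^ j * (int (m + 1) * int (xseq m x r (n - j)) + int (rseq m x r (n - j)))
           = (\<Sum>k = n - j + 1..n. int (m + 1) ^ (n - k) * int m ^ (k - 1 + j - n) * int (rseq m x r k))]
           (mod int m ^ j) \<and>
         [int (m + 1) ^ n * (int (m + 1) * int x + int r)
           = (\<Sum>k = 1..n. int (m + 1) ^ (n - k) * int m ^ (k - 1) * int (rseq m x r k))]
           (mod int m ^ n)"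
proof -
  have rec: "\<And>k. int m * int (xseq m x r (Suc k)) + int (rseq m x r (Suc k))
      = (int m + 1) * int (xseq m x r k) + int (rseq m x r k)"
  proof -
    fix k
    have "int (m * xseq m x r (Suc k) + rseq m x r (Suc k)) = int ((m+1) * xseq m x r k + rseq m x r k)"
      using enum_rec[OF assms(1,2,3)] by presburger
    then show "int m * int (xseq m x r (Suc k)) + int (rseq m x r (Suc k))
      = (int m + 1) * int (xseq m x r k) + int (rseq m x r k)" by (simp add: algebra_simps)
  qed
  note C = cong_abs[where M = "int m" and X = "\<lambda>k. int (xseq m x r k)" and R = "\<lambda>k. int (rseq m x r k)", OF rec]
  have e: "int (m+1) = int m + 1" by simp
  have x0': "xseq m x r 0 = x" "rseq m x r 0 = r"
    using enum0[OF assms(1,2,3)] by (simp_all add: xseq_def rseq_def)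
  have P1: "[(int m + 1) ^ j * ((int m + 1) * int (xseq m x r (n - j)) + int (rseq m x r (n - j)))
           = (\<Sum>k = n - j + 1..n. (int m + 1) ^ (n - k) * int m ^ (k - 1 + j - n) * int (rseq m x r k))]
           (mod int m ^ j)" using C[OF assms(5)] .
  have P2: "[(int m + 1) ^ n * ((int m + 1) * int (xseq m x r (n - n)) + int (rseq m x r (n - n)))
           = (\<Sum>k = n - n + 1..n. (int m + 1) ^ (n - k) * int m ^ (k - 1 + n - n) * int (rseq m x r k))]
           (mod int m ^ n)" using C[of n n] by simp
  have P2': "[(int m + 1) ^ n * ((int m + 1) * int x + int r)
           = (\<Sum>k = 1..n. (int m + 1) ^ (n - k) * int m ^ (k - 1) * int (rseq m x r k))]
           (mod int m ^ n)" using P2 x0' by simp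
  show ?thesis unfolding e using P1 P2' by blast
qed

end
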